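(* Let $X$ be a real Banach space and $f:X\to\mathbb{R}\cup\{+\infty\}$ proper, convex and lsc such that $\mathcal{F}_{\partial f}$ is a singleton. Let $\mathcal{Z} = \mathrm{Im}(Df^* )$, $K = \overline{\mathrm{conv}}(\mathcal{Z})$ and $\mathcal{V} = \overline{\mathrm{conv}}^{w^*}\big(\bigcup_{x\in\mathrm{int}(\mathrm{dom}\, f)}\partial f(x)\big)$. Assume $0\in\mathcal{V}$ and $\mathrm{dom}(Df^* )\neq\varnothing$. Then \[ K\subseteq\mathrm{argmin}\, f\subseteq\mathrm{dom}\, f \quad\text{and}\quad \langle k_1-k_2,v^*\rangle = 0 \ \text{for all } k_1,k_2\in K,\ v^*\in\mathcal{V}. \] Moreover, for every $x\in\mathrm{int}(\mathrm{dom}\, f)$, $x^*\in\partial f(x)$ and $\widehat{x}\in K$, \[ f(x) = \langle x-\widehat{x},x^*\rangle + \min f. \]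
   Context: $f^*: X^*\to\mathbb{R}\cup\{+\infty\}$ is the Fenchel conjugate. $\mathrm{dom}(Df^* )$ denotes the set of points $v^*\in X^*$ at which $f^*$ is Fréchet differentiable; at such points the Fréchet derivative $Df^*(v^* )$ belongs to (the canonical image of) $X$, and $\mathrm{Im}(Df^* )=\{Df^*(v^* ): v^*\in\mathrm{dom}(Df^* )\}\subseteq X$. $\overline{\mathrm{conv}}$ is the norm-closed convex hull and $\overline{\mathrm{conv}}^{w^*}$ the weak$^*$-closed convex hull. For a maximal monotone $A$, $\mathcal{F}_A$ is the set of proper convex lsc $h$ on $X\times X^*$ with $h(x,x^* )\ge\langle x,x^*\rangle$ everywhere and equality on $\mathrm{Gr}(A)$. *)

theory Defs
  imports "HOL-Analysis.Analysis"
begin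

definition ext_proper :: "('a \<Rightarrow> ereal) \<Rightarrow> bool" where
  "ext_proper f \<longleftrightarrow> (\<forall>x. f x \<noteq> -\<infinity>) \<and> (\<exists>x. f x \<noteq> \<infinity>)"

definition ext_convex :: "('a::real_vector \<Rightarrow> ereal) \<Rightarrow> bool" where
  "ext_convex f \<longleftrightarrow> (\<forall>x y t. 0 \<le> t \<and> t \<le> 1 \<longrightarrow>
      f ((1 - t) *\<^sub>R x + t *\<^sub>R y) \<le> ereal (1 - t) * f x + ereal t * f y)"

definition ext_lsc :: "('a::topological_space \<Rightarrow> ereal) \<Rightarrow> bool" where
  "ext_lsc f \<longleftrightarrow> (\<forall>c::real. closed {x. f x \<le> ereal c})"

definition dom_ext :: "('a \<Rightarrow> ereal) \<Rightarrow> 'a set" where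
  "dom_ext f = {x. f x \<noteq> \<infinity>}"

definition subdiff :: "('a::real_normed_vector \<Rightarrow> ereal) \<Rightarrow> 'a \<Rightarrow> ('a \<Rightarrow>\<^sub>L real) set" where
  "subdiff f x = {v. f x \<noteq> \<infinity> \<and> (\<forall>y. f y \<ge> f x + ereal (blinfun_apply v (y - x)))}"

definition graph_subdiff :: "('a::real_normed_vector \<Rightarrow> ereal) \<Rightarrow> ('a \<times> ('a \<Rightarrow>\<^sub>L real)) set" where
  "graph_subdiff f = {(x, v). v \<in> subdiff f x}"

definition fitzpatrick_family ::
  "('a::real_normed_vector \<times> ('a \<Rightarrow>\<^sub>L real)) set \<Rightarrow> ('a \<times> ('a \<Rightarrow>\<^sub>L real) \<Rightarrow> ereal) set" where
  "fitzpatrick_family A = {h. ext_proper h \<and> ext_convex h \<and> ext_lsc h \<and>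
      (\<forall>x v. h (x, v) \<ge> ereal (blinfun_apply v x)) \<and>
      (\<forall>(x, v) \<in> A. h (x, v) = ereal (blinfun_apply v x))}"

definition fenchel :: "('a::real_normed_vector \<Rightarrow> ereal) \<Rightarrow> ('a \<Rightarrow>\<^sub>L real) \<Rightarrow> ereal" where
  "fenchel f v = (SUP x. ereal (blinfun_apply v x) - f x)"

text \<open>g on X* is Frechet differentiable at v with derivative in (the canonical image of) X,
  namely the point x: g is finite near v and its derivative is w \<mapsto> w x.\<close>
definition frechet_grad_at :: "(('a::real_normed_vector \<Rightarrow>\<^sub>L real) \<Rightarrow> ereal) \<Rightarrow> ('a \<Rightarrow>\<^sub>L real) \<Rightarrow> 'a \<Rightarrow> bool" where
  "frechet_grad_at g v x \<longleftrightarrow> (\<exists>e>0. \<forall>w \<in> ball v e. \<bar>g w\<bar> \<noteq> \<infinity>) \<and>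
      ((\<lambda>w. real_of_ereal (g w)) has_derivative (\<lambda>w. blinfun_apply w x)) (at v)"

definition frechet_differentiable_pt :: "(('a::real_normed_vector \<Rightarrow>\<^sub>L real) \<Rightarrow> ereal) \<Rightarrow> ('a \<Rightarrow>\<^sub>L real) \<Rightarrow> bool" where
  "frechet_differentiable_pt g v \<longleftrightarrow>
     (\<exists>e>0. \<forall>w \<in> ball v e. \<bar>g w\<bar> \<noteq> \<infinity>) \<and>
     (\<exists>D. ((\<lambda>w. real_of_ereal (g w)) has_derivative D) (at v))"

definition dom_Dconj :: "('a::real_normed_vector \<Rightarrow> ereal) \<Rightarrow> ('a \<Rightarrow>\<^sub>L real) set" where
  "dom_Dconj f = {v. frechet_differentiable_pt (fenchel f) v}"

definition im_Dconj :: "('a::real_normed_vector \<Rightarrow> ereal) \<Rightarrow> 'a set" where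
  "im_Dconj f = {x. \<exists>v. frechet_grad_at (fenchel f) v x}"

definition weak_star_topology :: "('a::real_normed_vector \<Rightarrow>\<^sub>L real) topology" where
  "weak_star_topology = topology_generated_by
     {{v. blinfun_apply v x \<in> U} | x U. open U}"

definition weak_star_closed_convex_hull :: "('a::real_normed_vector \<Rightarrow>\<^sub>L real) set \<Rightarrow> ('a \<Rightarrow>\<^sub>L real) set" where
  "weak_star_closed_convex_hull S = (\<lambda>T. convex T \<and> closedin weak_star_topology T) hull S"

definition argmin_ext :: "('a \<Rightarrow> ereal) \<Rightarrow> 'a set" where
  "argmin_ext f = {x. \<forall>y. f x \<le> f y}"

end

theory Submission
  imports Defs
begin

lemma ext_convexI:
  fixes f :: "'a::real_vector \<Rightarrow> ereal"
  assumes ninf: "\<And>x. f x \<noteq> -\<infinity>"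
    and main: "\<And>x y t a b. 0 < t \<Longrightarrow> t < 1 \<Longrightarrow> f x = ereal a \<Longrightarrow> f y = ereal b \<Longrightarrow>
          f ((1 - t) *\<^sub>R x + t *\<^sub>R y) \<le> ereal ((1 - t) * a + t * b)"
  shows "ext_convex f"
  unfolding ext_convex_def
proof (intro allI impI)
  fix x y and t :: real
  assume t: "0 \<le> t \<and> t \<le> 1"
  show "f ((1 - t) *\<^sub>R x + t *\<^sub>R y) \<le> ereal (1 - t) * f x + ereal t * f y"
  proof (cases "t = 0")
    case True
    then show ?thesis by (simp add: zero_ereal_def[symmetric] one_ereal_def[symmetric])
  next
    case False
    show ?thesis
  proof (cases "t = 1")
    case True
    then show ?thesis by (simp add: zero_ereal_def[symmetric] one_ereal_def[symmetric])
  next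
    case False
    with \<open>t \<noteq> 0\<close> t have t01: "0 < t" "t < 1" by auto
    show ?thesis
    proof (cases "f x = \<infinity> \<or> f y = \<infinity>")
      case True
      have eq: "ereal (1 - t) * f x + ereal t * f y = \<infinity>"
        using True t01 ninf[of x] ninf[of y]
        by (cases "f x"; cases "f y"; auto)
      show ?thesis unfolding eq by simp
    next
      case False
      then obtain a b where ab: "f x = ereal a" "f y = ereal b"
        using ninf[of x] ninf[of y] by (cases "f x"; cases "f y"; auto)
      show ?thesis using main[OF t01 ab] ab by simp
    qed
  qed
  qed
qed

lemma ext_convexD:
  assumes "ext_convex f" "f x = ereal a" "f y = ereal b" "0 \<le> t" "t \<le> 1"
  shows "f ((1 - t) *\<^sub>R x + t *\<^sub>R y) \<le> ereal ((1 - t) * a + t * b)"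
  using assms unfolding ext_convex_def by (metis plus_ereal.simps(1) times_ereal.simps(1))

lemma ext_convex_SUP:
  assumes "\<And>i. i \<in> I \<Longrightarrow> ext_convex (F i)"
  shows "ext_convex (\<lambda>p. SUP i\<in>I. F i p)"
  unfolding ext_convex_def
proof (intro allI impI)
  fix x y and t :: real
  assume t: "0 \<le> t \<and> t \<le> 1"
  show "(SUP i\<in>I. F i ((1 - t) *\<^sub>R x + t *\<^sub>R y)) \<le> ereal (1 - t) * (SUP i\<in>I. F i x) + ereal t * (SUP i\<in>I. F i y)"
  proof (rule SUP_least)
    fix i assume i: "i \<in> I"
    have "F i ((1 - t) *\<^sub>R x + t *\<^sub>R y) \<le> ereal (1 - t) * F i x + ereal t * F i y"
      using assms[OF i] t unfolding ext_convex_def by blast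
    also have "\<dots> \<le> ereal (1 - t) * (SUP i\<in>I. F i x) + ereal t * (SUP i\<in>I. F i y)"
      apply (rule add_mono)
       apply (rule ereal_mult_left_mono) using i t apply (auto intro: SUP_upper)
      apply (rule ereal_mult_left_mono) using i t apply (auto intro: SUP_upper)
      done
    finally show "F i ((1 - t) *\<^sub>R x + t *\<^sub>R y) \<le> \<dots>" .
  qed
qed

lemma ext_convex_max:
  assumes "ext_convex F" "ext_convex G"
  shows "ext_convex (\<lambda>p. max (F p) (G p))"
  unfolding ext_convex_def
proof (intro allI impI)
  fix x y and t :: real
  assume t: "0 \<le> t \<and> t \<le> 1"
  have 1: "F ((1 - t) *\<^sub>R x + t *\<^sub>R y) \<le> ereal (1 - t) * max (F x) (G x) + ereal t * max (F y) (G y)"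
  proof -
    have "F ((1 - t) *\<^sub>R x + t *\<^sub>R y) \<le> ereal (1 - t) * F x + ereal t * F y"
      using assms(1) t unfolding ext_convex_def by blast
    also have "\<dots> \<le> ereal (1 - t) * max (F x) (G x) + ereal t * max (F y) (G y)"
      by (intro add_mono ereal_mult_left_mono) (use t in auto)
    finally show ?thesis .
  qed
  have 2: "G ((1 - t) *\<^sub>R x + t *\<^sub>R y) \<le> ereal (1 - t) * max (F x) (G x) + ereal t * max (F y) (G y)"
  proof -
    have "G ((1 - t) *\<^sub>R x + t *\<^sub>R y) \<le> ereal (1 - t) * G x + ereal t * G y"
      using assms(2) t unfolding ext_convex_def by blast
    also have "\<dots> \<le> ereal (1 - t) * max (F x) (G x) + ereal t * max (F y) (G y)"
      by (intro add_mono ereal_mult_left_mono) (use t in auto)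
    finally show ?thesis .
  qed
  show "max (F ((1 - t) *\<^sub>R x + t *\<^sub>R y)) (G ((1 - t) *\<^sub>R x + t *\<^sub>R y))
         \<le> ereal (1 - t) * max (F x) (G x) + ereal t * max (F y) (G y)"
    using 1 2 by simp
qed

lemma ext_convex_plus:
  fixes F :: "'a::real_vector \<Rightarrow> ereal" and G :: "'b::real_vector \<Rightarrow> ereal"
  assumes "ext_convex F" "ext_convex G" "\<And>x. F x \<noteq> -\<infinity>" "\<And>x. G x \<noteq> -\<infinity>"
  shows "ext_convex (\<lambda>p. F (fst p) + G (snd p))"
proof (rule ext_convexI)
  fix p show "F (fst p) + G (snd p) \<noteq> -\<infinity>" using assms(3,4) by simp
next
  fix p q :: "'a \<times> 'b" and t a b :: real
  assume t: "0 < t" "t < 1" and a: "F (fst p) + G (snd p) = ereal a" and b: "F (fst q) + G (snd q) = ereal b"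
  obtain a1 a2 where A: "F (fst p) = ereal a1" "G (snd p) = ereal a2" "a = a1 + a2"
    using a assms(3)[of "fst p"] assms(4)[of "snd p"]
    by (cases "F (fst p)"; cases "G (snd p)"; auto)
  obtain b1 b2 where B: "F (fst q) = ereal b1" "G (snd q) = ereal b2" "b = b1 + b2"
    using b assms(3)[of "fst q"] assms(4)[of "snd q"]
    by (cases "F (fst q)"; cases "G (snd q)"; auto)
  have 1: "F ((1 - t) *\<^sub>R fst p + t *\<^sub>R fst q) \<le> ereal ((1 - t) * a1 + t * b1)"
    by (rule ext_convexD[OF assms(1) A(1) B(1)]) (use t in auto)
  have 2: "G ((1 - t) *\<^sub>R snd p + t *\<^sub>R snd q) \<le> ereal ((1 - t) * a2 + t * b2)"
    by (rule ext_convexD[OF assms(2) A(2) B(2)]) (use t in auto)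
  have "F (fst ((1 - t) *\<^sub>R p + t *\<^sub>R q)) + G (snd ((1 - t) *\<^sub>R p + t *\<^sub>R q))
        \<le> ereal ((1 - t) * a1 + t * b1) + ereal ((1 - t) * a2 + t * b2)"
    using add_mono[OF 1 2] by simp
  also have "\<dots> = ereal ((1 - t) * a + t * b)" using A B by (simp add: algebra_simps)
  finally show "F (fst ((1 - t) *\<^sub>R p + t *\<^sub>R q)) + G (snd ((1 - t) *\<^sub>R p + t *\<^sub>R q)) \<le> ereal ((1 - t) * a + t * b)" .
qed

lemma ext_convex_affine:
  assumes "linear l"
  shows "ext_convex (\<lambda>p. ereal (l p + c))"
  unfolding ext_convex_def
proof (intro allI impI)
  fix x y and t :: real
  assume t: "0 \<le> t \<and> t \<le> 1"
  have "l ((1 - t) *\<^sub>R x + t *\<^sub>R y) + c = (1 - t) * (l x + c) + t * (l y + c)"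
    using linear_add[OF assms, of "(1-t) *\<^sub>R x" "t *\<^sub>R y"] linear_scale[OF assms, of "1-t" x] linear_scale[OF assms, of t y]
    by (simp add: algebra_simps)
  then show "ereal (l ((1 - t) *\<^sub>R x + t *\<^sub>R y) + c) \<le> ereal (1 - t) * ereal (l x + c) + ereal t * ereal (l y + c)"
    by simp
qed

lemma ext_convex_minf: "ext_convex (\<lambda>p. -\<infinity>)"
  unfolding ext_convex_def by simp

lemma ext_lsc_SUP:
  assumes "\<And>i. i \<in> I \<Longrightarrow> ext_lsc (F i)"
  shows "ext_lsc (\<lambda>p. SUP i\<in>I. F i p)"
  unfolding ext_lsc_def
proof
  fix c :: real
  have "{p. (SUP i\<in>I. F i p) \<le> ereal c} = (\<Inter>i\<in>I. {p. F i p \<le> ereal c})"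
    by (auto simp: SUP_le_iff)
  then show "closed {p. (SUP i\<in>I. F i p) \<le> ereal c}"
    using assms unfolding ext_lsc_def by (auto intro!: closed_INT)
qed

lemma ext_lsc_cont:
  assumes "continuous_on UNIV g"
  shows "ext_lsc (\<lambda>p. ereal (g p))"
  unfolding ext_lsc_def
  using closed_Collect_le[OF assms continuous_on_const] by simp

lemma ext_lsc_minf: "ext_lsc (\<lambda>p. -\<infinity>)"
  unfolding ext_lsc_def by simp

lemma ext_lsc_max:
  assumes "ext_lsc F" "ext_lsc G"
  shows "ext_lsc (\<lambda>p. max (F p) (G p))"
  unfolding ext_lsc_def
proof
  fix c :: real
  have "{p. max (F p) (G p) \<le> ereal c} = {p. F p \<le> ereal c} \<inter> {p. G p \<le> ereal c}" by auto
  then show "closed {p. max (F p) (G p) \<le> ereal c}"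
    using assms unfolding ext_lsc_def by (auto intro!: closed_Int)
qed

lemma ext_lsc_open_gt:
  assumes "ext_lsc F"
  shows "open {x. F x > ereal q}"
proof -
  have "{x. F x > ereal q} = - {x. F x \<le> ereal q}" by auto
  then show ?thesis using assms unfolding ext_lsc_def by (simp add: open_Compl)
qed

lemma ext_lsc_plus:
  fixes F :: "'a::topological_space \<Rightarrow> ereal" and G :: "'b::topological_space \<Rightarrow> ereal"
  assumes "ext_lsc F" "ext_lsc G" "\<And>x. F x \<noteq> -\<infinity>" "\<And>x. G x \<noteq> -\<infinity>"
  shows "ext_lsc (\<lambda>p. F (fst p) + G (snd p))"
  unfolding ext_lsc_def
proof
  fix c :: real
  have "open (- {p. F (fst p) + G (snd p) \<le> ereal c})"
  proof (subst open_subopen, intro ballI)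
    fix p assume "p \<in> - {p. F (fst p) + G (snd p) \<le> ereal c}"
    then have gt: "F (fst p) + G (snd p) > ereal c" by auto
    obtain q where q: "F (fst p) > ereal q" "G (snd p) > ereal (c - q)"
    proof (cases "F (fst p)")
      case (real a)
      show ?thesis
      proof (cases "G (snd p)")
        case (real b)
        then show ?thesis using \<open>F (fst p) = ereal a\<close> gt
          by (intro that[of "a - (a + b - c) / 2"]) (auto simp: field_simps)
      next
        case PInf
        then show ?thesis using \<open>F (fst p) = ereal a\<close> by (intro that[of "a - 1"]) auto
      next
        case MInf then show ?thesis using assms(4) by auto
      qed
    next
      case PInf
      then show ?thesis
      proof (cases "G (snd p)")
        case (real b)
        then show ?thesis using PInf by (intro that[of "c - b + 1"]) auto
      next
        case PInf
        then show ?thesis using \<open>F (fst p) = \<infinity>\<close> by (intro that[of 0]) auto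
      next
        case MInf then show ?thesis using assms(4) by auto
      qed
    next
      case MInf then show ?thesis using assms(3) by auto
    qed
    show "\<exists>T. open T \<and> p \<in> T \<and> T \<subseteq> - {p. F (fst p) + G (snd p) \<le> ereal c}"
    proof (intro exI conjI)
      show "open ({x. F x > ereal q} \<times> {y. G y > ereal (c - q)})"
        using ext_lsc_open_gt[OF assms(1)] ext_lsc_open_gt[OF assms(2)] by (intro open_Times)
      show "p \<in> {x. F x > ereal q} \<times> {y. G y > ereal (c - q)}" using q by (cases p) auto
      show "{x. F x > ereal q} \<times> {y. G y > ereal (c - q)} \<subseteq> - {p. F (fst p) + G (snd p) \<le> ereal c}"
      proof
        fix r assume "r \<in> {x. F x > ereal q} \<times> {y. G y > ereal (c - q)}"
        then have r: "F (fst r) > ereal q" "G (snd r) > ereal (c - q)" by auto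
        have "ereal q + ereal (c - q) < F (fst r) + G (snd r)"
          by (rule ereal_add_strict_mono2[OF r])
        then show "r \<in> - {p. F (fst p) + G (snd p) \<le> ereal c}" by auto
      qed
    qed
  qed
  then show "closed {p. F (fst p) + G (snd p) \<le> ereal c}" by (simp add: closed_def)
qed

definition bic :: "('a::real_normed_vector \<Rightarrow> ereal) \<Rightarrow> 'a \<Rightarrow> ereal" where
  "bic f x = (SUP w. ereal (blinfun_apply w x) - fenchel f w)"

definition hh1 :: "('a::real_normed_vector \<Rightarrow> ereal) \<Rightarrow> 'a \<times> ('a \<Rightarrow>\<^sub>L real) \<Rightarrow> ereal" where
  "hh1 f = (\<lambda>p. f (fst p) + fenchel f (snd p))"

definition kk :: "('a::real_normed_vector \<Rightarrow> ereal) \<Rightarrow> 'a \<times> ('a \<Rightarrow>\<^sub>L real) \<Rightarrow> ereal" where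
  "kk f = (\<lambda>p. bic f (fst p) + fenchel f (snd p))"

definition phi :: "('a::real_normed_vector \<Rightarrow> ereal) \<Rightarrow> 'a \<times> ('a \<Rightarrow>\<^sub>L real) \<Rightarrow> ereal" where
  "phi f = (\<lambda>p. SUP q\<in>graph_subdiff f. ereal (blinfun_apply (snd p) (fst q) + blinfun_apply (snd q) (fst p) - blinfun_apply (snd q) (fst q)))"

definition gp :: "'a::real_normed_vector \<Rightarrow> ('a \<Rightarrow>\<^sub>L real) \<Rightarrow> 'a \<times> ('a \<Rightarrow>\<^sub>L real) \<Rightarrow> ereal" where
  "gp a aw = (\<lambda>p. ereal (blinfun_apply aw (fst p) + blinfun_apply (snd p) a - blinfun_apply aw a))"

lemma linear_eval_left: "linear (\<lambda>w::'a::real_normed_vector \<Rightarrow>\<^sub>L real. blinfun_apply w x)"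
  using blinfun.bounded_linear_left bounded_linear.linear by blast

lemma linear_gp: "linear (\<lambda>p::'a::real_normed_vector \<times> ('a \<Rightarrow>\<^sub>L real). blinfun_apply aw (fst p) + blinfun_apply (snd p) a)"
  by (rule linearI) (simp_all add: blinfun.add_left blinfun.scaleR_left blinfun.add_right blinfun.scaleR_right algebra_simps)

lemma cont_gp: "continuous_on UNIV (\<lambda>p::'a::real_normed_vector \<times> ('a \<Rightarrow>\<^sub>L real). blinfun_apply aw (fst p) + blinfun_apply (snd p) a + c)"
  by (intro continuous_intros)

locale fp =
  fixes f :: "'a::banach \<Rightarrow> ereal"
  assumes proper: "ext_proper f" and cvx: "ext_convex f" and lsc: "ext_lsc f"
begin

lemma fin: "f x \<noteq> -\<infinity>"
  using proper unfolding ext_proper_def by auto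

lemma fenchel_upper: "ereal (blinfun_apply w x) - f x \<le> fenchel f w"
  unfolding fenchel_def by (rule SUP_upper) auto

lemma fenchel_ninf: "fenchel f w \<noteq> -\<infinity>"
proof -
  obtain x where "f x \<noteq> \<infinity>" using proper unfolding ext_proper_def by auto
  then obtain a where "f x = ereal a" using fin[of x] by (cases "f x") auto
  then have "ereal (blinfun_apply w x - a) \<le> fenchel f w" using fenchel_upper[of w x] by simp
  then show ?thesis by auto
qed

lemma young: "ereal (blinfun_apply w x) \<le> f x + fenchel f w"
proof (cases "f x")
  case (real a)
  have "ereal (blinfun_apply w x) - ereal a \<le> fenchel f w" using fenchel_upper[of w x] real by simp
  then show ?thesis using real fenchel_ninf[of w] by (cases "fenchel f w") auto
next
  case PInf
  then show ?thesis using fenchel_ninf[of w] by simp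
next
  case MInf then show ?thesis using fin by auto
qed

lemma fenchel_term_cases:
  "(\<lambda>w. ereal (blinfun_apply w x) - f x) = (\<lambda>w. -\<infinity>) \<or>
   (\<exists>c. (\<lambda>w. ereal (blinfun_apply w x) - f x) = (\<lambda>w. ereal (blinfun_apply w x + c)))"
proof (cases "f x")
  case (real a)
  then show ?thesis by (intro disjI2 exI[of _ "-a"]) auto
qed (use fin[of x] in auto)

lemma fenchel_convex: "ext_convex (fenchel f)"
  unfolding fenchel_def[abs_def]
proof (rule ext_convex_SUP)
  fix x
  from fenchel_term_cases[of x] show "ext_convex (\<lambda>w. ereal (blinfun_apply w x) - f x)"
  proof
    assume "(\<lambda>w. ereal (blinfun_apply w x) - f x) = (\<lambda>w. -\<infinity>)"
    then show ?thesis using ext_convex_minf by metis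
  next
    assume "\<exists>c. (\<lambda>w. ereal (blinfun_apply w x) - f x) = (\<lambda>w. ereal (blinfun_apply w x + c))"
    then obtain c where "(\<lambda>w. ereal (blinfun_apply w x) - f x) = (\<lambda>w. ereal (blinfun_apply w x + c))" by blast
    then show ?thesis using ext_convex_affine[OF linear_eval_left, of x c] by metis
  qed
qed

lemma fenchel_lsc: "ext_lsc (fenchel f)"
  unfolding fenchel_def[abs_def]
proof (rule ext_lsc_SUP)
  fix x
  from fenchel_term_cases[of x] show "ext_lsc (\<lambda>w. ereal (blinfun_apply w x) - f x)"
  proof
    assume "(\<lambda>w. ereal (blinfun_apply w x) - f x) = (\<lambda>w. -\<infinity>)"
    then show ?thesis using ext_lsc_minf by metis
  next
    assume "\<exists>c. (\<lambda>w. ereal (blinfun_apply w x) - f x) = (\<lambda>w. ereal (blinfun_apply w x + c))"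
    then obtain c where e: "(\<lambda>w. ereal (blinfun_apply w x) - f x) = (\<lambda>w. ereal (blinfun_apply w x + c))" by blast
    have "continuous_on UNIV (\<lambda>w::'a \<Rightarrow>\<^sub>L real. blinfun_apply w x + c)"
      by (intro continuous_intros)
    then show ?thesis using ext_lsc_cont e by metis
  qed
qed

lemma subdiff_fin:
  assumes "w \<in> subdiff f x"
  obtains a where "f x = ereal a" "fenchel f w = ereal (blinfun_apply w x - a)"
proof -
  from assms have fx: "f x \<noteq> \<infinity>" and ineq: "\<And>y. f y \<ge> f x + ereal (blinfun_apply w (y - x))"
    unfolding subdiff_def by auto
  then obtain a where a: "f x = ereal a" using fin[of x] by (cases "f x") auto
  have "fenchel f w \<le> ereal (blinfun_apply w x - a)"
    unfolding fenchel_def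
  proof (rule SUP_least)
    fix y
    have "f y \<ge> ereal (a + blinfun_apply w (y - x))" using ineq[of y] a by simp
    then show "ereal (blinfun_apply w y) - f y \<le> ereal (blinfun_apply w x - a)"
      using fin[of y] by (cases "f y") (auto simp: blinfun.diff_right)
  qed
  moreover have "ereal (blinfun_apply w x - a) \<le> fenchel f w"
    using fenchel_upper[of w x] a by simp
  ultimately show ?thesis using a that by auto
qed

lemma subdiff_iff:
  assumes "f x = ereal a"
  shows "w \<in> subdiff f x \<longleftrightarrow> (\<forall>y. f y \<ge> ereal (a + blinfun_apply w (y - x)))"
  using assms unfolding subdiff_def by auto

lemma hh1_graph:
  assumes "(x, w) \<in> graph_subdiff f"
  shows "hh1 f (x, w) = ereal (blinfun_apply w x)"
  using assms unfolding graph_subdiff_def hh1_def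
  by (auto elim!: subdiff_fin)

lemma hh1_in:
  assumes "graph_subdiff f \<noteq> {}"
  shows "hh1 f \<in> fitzpatrick_family (graph_subdiff f)"
  unfolding fitzpatrick_family_def
proof (intro CollectI conjI allI)
  obtain x w where xw: "(x, w) \<in> graph_subdiff f" using assms by auto
  show "ext_proper (hh1 f)"
    unfolding ext_proper_def
  proof
    show "\<forall>p. hh1 f p \<noteq> -\<infinity>" using fin fenchel_ninf by (simp add: hh1_def)
    show "\<exists>p. hh1 f p \<noteq> \<infinity>" using hh1_graph[OF xw] by (intro exI[of _ "(x, w)"]) simp
  qed
  show "ext_convex (hh1 f)" unfolding hh1_def
    by (rule ext_convex_plus[OF cvx fenchel_convex fin fenchel_ninf])
  show "ext_lsc (hh1 f)" unfolding hh1_def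
    by (rule ext_lsc_plus[OF lsc fenchel_lsc fin fenchel_ninf])
  show "ereal (blinfun_apply v x) \<le> hh1 f (x, v)" for x v
    using young by (simp add: hh1_def)
  show "\<forall>(x, v)\<in>graph_subdiff f. hh1 f (x, v) = ereal (blinfun_apply v x)"
    using hh1_graph by auto
qed

lemma bic_upper: "ereal (blinfun_apply w x) - fenchel f w \<le> bic f x"
  unfolding bic_def by (rule SUP_upper) auto

lemma bic_le: "bic f x \<le> f x"
  unfolding bic_def
proof (rule SUP_least)
  fix w
  show "ereal (blinfun_apply w x) - fenchel f w \<le> f x"
    using young[of w x] fin[of x] fenchel_ninf[of w]
    by (cases "f x"; cases "fenchel f w") auto
qed

lemma bic_ninf:
  assumes "fenchel f v0 \<noteq> \<infinity>"
  shows "bic f x \<noteq> -\<infinity>"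
proof -
  obtain b where "fenchel f v0 = ereal b" using assms fenchel_ninf[of v0] by (cases "fenchel f v0") auto
  then have "ereal (blinfun_apply v0 x - b) \<le> bic f x" using bic_upper[of v0 x] by simp
  then show ?thesis by auto
qed

lemma bic_term_cases:
  "(\<lambda>x. ereal (blinfun_apply w x) - fenchel f w) = (\<lambda>x. -\<infinity>) \<or>
   (\<exists>c. (\<lambda>x. ereal (blinfun_apply w x) - fenchel f w) = (\<lambda>x. ereal (blinfun_apply w x + c)))"
proof (cases "fenchel f w")
  case (real a)
  then show ?thesis by (intro disjI2 exI[of _ "-a"]) auto
qed (use fenchel_ninf[of w] in auto)

lemma bic_convex: "ext_convex (bic f)"
  unfolding bic_def[abs_def]
proof (rule ext_convex_SUP)
  fix w :: "'a \<Rightarrow>\<^sub>L real"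
  have l: "linear (blinfun_apply w)" using blinfun.bounded_linear_right bounded_linear.linear by blast
  from bic_term_cases[of w] show "ext_convex (\<lambda>x. ereal (blinfun_apply w x) - fenchel f w)"
  proof
    assume "(\<lambda>x. ereal (blinfun_apply w x) - fenchel f w) = (\<lambda>x. -\<infinity>)"
    then show ?thesis using ext_convex_minf by metis
  next
    assume "\<exists>c. (\<lambda>x. ereal (blinfun_apply w x) - fenchel f w) = (\<lambda>x. ereal (blinfun_apply w x + c))"
    then obtain c where "(\<lambda>x. ereal (blinfun_apply w x) - fenchel f w) = (\<lambda>x. ereal (blinfun_apply w x + c))" by blast
    then show ?thesis using ext_convex_affine[OF l, of c] by metis
  qed
qed

lemma bic_lsc: "ext_lsc (bic f)"
  unfolding bic_def[abs_def]
proof (rule ext_lsc_SUP)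
  fix w :: "'a \<Rightarrow>\<^sub>L real"
  from bic_term_cases[of w] show "ext_lsc (\<lambda>x. ereal (blinfun_apply w x) - fenchel f w)"
  proof
    assume "(\<lambda>x. ereal (blinfun_apply w x) - fenchel f w) = (\<lambda>x. -\<infinity>)"
    then show ?thesis using ext_lsc_minf by metis
  next
    assume "\<exists>c. (\<lambda>x. ereal (blinfun_apply w x) - fenchel f w) = (\<lambda>x. ereal (blinfun_apply w x + c))"
    then obtain c where e: "(\<lambda>x. ereal (blinfun_apply w x) - fenchel f w) = (\<lambda>x. ereal (blinfun_apply w x + c))" by blast
    have "continuous_on UNIV (\<lambda>x. blinfun_apply w x + c)"
      by (intro continuous_intros)
    then show ?thesis using ext_lsc_cont e by metis
  qed
qed

lemma kk_in:
  assumes "graph_subdiff f \<noteq> {}" and v0: "fenchel f v0 \<noteq> \<infinity>"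
  shows "kk f \<in> fitzpatrick_family (graph_subdiff f)"
  unfolding fitzpatrick_family_def
proof (intro CollectI conjI allI)
  have ge: "ereal (blinfun_apply w x) \<le> kk f (x, w)" for x w
  proof (cases "fenchel f w")
    case (real b)
    have "ereal (blinfun_apply w x) - ereal b \<le> bic f x" using bic_upper[of w x] real by simp
    then show ?thesis using real bic_ninf[OF v0, of x] by (cases "bic f x") (auto simp: kk_def)
  next
    case PInf then show ?thesis by (simp add: kk_def)
  next
    case MInf then show ?thesis using fenchel_ninf by auto
  qed
  have gr: "kk f (x, w) = ereal (blinfun_apply w x)" if "(x, w) \<in> graph_subdiff f" for x w
  proof (rule antisym[OF _ ge])
    have "kk f (x, w) \<le> hh1 f (x, w)" unfolding kk_def hh1_def using bic_le by (auto intro: add_right_mono)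
    then show "kk f (x, w) \<le> ereal (blinfun_apply w x)" using hh1_graph[OF that] by simp
  qed
  obtain x w where xw: "(x, w) \<in> graph_subdiff f" using assms by auto
  show "ext_proper (kk f)"
    unfolding ext_proper_def
  proof
    show "\<forall>p. kk f p \<noteq> -\<infinity>" using bic_ninf[OF v0] fenchel_ninf by (simp add: kk_def)
    show "\<exists>p. kk f p \<noteq> \<infinity>" using gr[OF xw] by (intro exI[of _ "(x, w)"]) simp
  qed
  show "ext_convex (kk f)" unfolding kk_def
    by (rule ext_convex_plus[OF bic_convex fenchel_convex bic_ninf[OF v0] fenchel_ninf])
  show "ext_lsc (kk f)" unfolding kk_def
    by (rule ext_lsc_plus[OF bic_lsc fenchel_lsc bic_ninf[OF v0] fenchel_ninf])
  show "ereal (blinfun_apply v x) \<le> kk f (x, v)" for x v by (rule ge)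
  show "\<forall>(x, v)\<in>graph_subdiff f. kk f (x, v) = ereal (blinfun_apply v x)"
    using gr by auto
qed

end

context fp
begin

lemma subdiff_mono:
  assumes "(x, w) \<in> graph_subdiff f" "(y, u) \<in> graph_subdiff f"
  shows "0 \<le> blinfun_apply w x - blinfun_apply w y - blinfun_apply u x + blinfun_apply u y"
proof -
  from assms have w: "w \<in> subdiff f x" and u: "u \<in> subdiff f y" by (auto simp: graph_subdiff_def)
  obtain a where a: "f x = ereal a" using subdiff_fin[OF w] by blast
  obtain b where b: "f y = ereal b" using subdiff_fin[OF u] by blast
  have "f y \<ge> f x + ereal (blinfun_apply w (y - x))" using w unfolding subdiff_def by auto
  then have 1: "b \<ge> a + blinfun_apply w y - blinfun_apply w x" using a b by (simp add: blinfun.diff_right)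
  have "f x \<ge> f y + ereal (blinfun_apply u (x - y))" using u unfolding subdiff_def by auto
  then have 2: "a \<ge> b + blinfun_apply u x - blinfun_apply u y" using a b by (simp add: blinfun.diff_right)
  show ?thesis using 1 2 by linarith
qed

end

locale fpu = fp f for f :: "'a::banach \<Rightarrow> ereal" +
  fixes v0 :: "'a \<Rightarrow>\<^sub>L real"
  assumes uniq: "\<exists>!h. h \<in> fitzpatrick_family (graph_subdiff f)"
    and gne: "graph_subdiff f \<noteq> {}"
    and v0: "fenchel f v0 \<noteq> \<infinity>"
begin

lemma F_eq: "h \<in> fitzpatrick_family (graph_subdiff f) \<Longrightarrow> h = hh1 f"
  using uniq hh1_in[OF gne] by blast

lemma bic_eq: "bic f x = f x"
proof -
  have "kk f = hh1 f" by (rule F_eq[OF kk_in[OF gne v0]])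
  then have "kk f (x, v0) = hh1 f (x, v0)" by simp
  then have e: "bic f x + fenchel f v0 = f x + fenchel f v0" by (simp add: kk_def hh1_def)
  obtain c where c: "fenchel f v0 = ereal c" using v0 fenchel_ninf[of v0] by (cases "fenchel f v0") auto
  show ?thesis using e c bic_ninf[OF v0, of x] fin[of x]
    by (cases "bic f x"; cases "f x") auto
qed

lemma gp_alt: "gp a aw = (\<lambda>p. ereal ((blinfun_apply aw (fst p) + blinfun_apply (snd p) a) + - blinfun_apply aw a))"
  unfolding gp_def by simp

lemma maxtrick:
  assumes "\<forall>(y, u)\<in>graph_subdiff f. gp a aw (y, u) \<le> ereal (blinfun_apply u y)"
  shows "gp a aw p \<le> hh1 f p"
proof -
  define h where "h = (\<lambda>p. max (hh1 f p) (gp a aw p))"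
  have H: "hh1 f \<in> fitzpatrick_family (graph_subdiff f)" by (rule hh1_in[OF gne])
  have gr: "h (x, w) = ereal (blinfun_apply w x)" if "(x, w) \<in> graph_subdiff f" for x w
    using assms that hh1_graph[OF that] unfolding h_def by auto
  have "h \<in> fitzpatrick_family (graph_subdiff f)"
    unfolding fitzpatrick_family_def
  proof (intro CollectI conjI allI)
    obtain x w where xw: "(x, w) \<in> graph_subdiff f" using gne by auto
    show "ext_proper h"
      unfolding ext_proper_def
    proof
      show "\<forall>p. h p \<noteq> -\<infinity>"
      proof
        fix p
        have "hh1 f p \<noteq> -\<infinity>" using fin fenchel_ninf by (simp add: hh1_def)
        then show "h p \<noteq> -\<infinity>" unfolding h_def by (metis max.cobounded1 ereal_infty_less_eq(2))
      qed
      show "\<exists>p. h p \<noteq> \<infinity>" using gr[OF xw] by (intro exI[of _ "(x, w)"]) simp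
    qed
    show "ext_convex h" unfolding h_def
      apply (rule ext_convex_max)
      using H apply (simp add: fitzpatrick_family_def)
      unfolding gp_alt by (rule ext_convex_affine[OF linear_gp])
    show "ext_lsc h" unfolding h_def
      apply (rule ext_lsc_max)
      using H apply (simp add: fitzpatrick_family_def)
      unfolding gp_alt by (rule ext_lsc_cont) (intro continuous_intros)
    show "ereal (blinfun_apply v x) \<le> h (x, v)" for x v
      using young[of v x] unfolding h_def hh1_def by (simp add: le_max_iff_disj)
    show "\<forall>(x, v)\<in>graph_subdiff f. h (x, v) = ereal (blinfun_apply v x)"
      using gr by auto
  qed
  then have "h = hh1 f" by (rule F_eq)
  then have "h p = hh1 f p" by simp
  then show ?thesis unfolding h_def by (metis max.cobounded2)
qed

lemma maxmono:
  assumes "\<forall>(y, u)\<in>graph_subdiff f. 0 \<le> blinfun_apply aw a - blinfun_apply aw y - blinfun_apply u a + blinfun_apply u y"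
  shows "(a, aw) \<in> graph_subdiff f"
proof -
  have "\<forall>(y, u)\<in>graph_subdiff f. gp a aw (y, u) \<le> ereal (blinfun_apply u y)"
    using assms unfolding gp_def by auto
  then have ineq: "ereal (blinfun_apply aw x' + blinfun_apply w' a - blinfun_apply aw a) \<le> f x' + fenchel f w'" for x' w'
    using maxtrick[of a aw "(x', w')"] unfolding gp_def hh1_def by simp
  have key: "fenchel f aw \<le> ereal (c - blinfun_apply w' a + blinfun_apply aw a)" if c: "fenchel f w' = ereal c" for w' c
    unfolding fenchel_def
  proof (rule SUP_least)
    fix x'
    have "ereal (blinfun_apply aw x' + blinfun_apply w' a - blinfun_apply aw a) \<le> f x' + ereal c"
      using ineq[of x' w'] c by simp
    then show "ereal (blinfun_apply aw x') - f x' \<le> ereal (c - blinfun_apply w' a + blinfun_apply aw a)"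
      using fin[of x'] by (cases "f x'") auto
  qed
  obtain c0 where c0: "fenchel f v0 = ereal c0" using v0 fenchel_ninf[of v0] by (cases "fenchel f v0") auto
  obtain b where b: "fenchel f aw = ereal b"
    using key[OF c0] fenchel_ninf[of aw] by (cases "fenchel f aw") auto
  have "f a \<le> ereal (blinfun_apply aw a - b)"
    unfolding bic_eq[of a, symmetric] bic_def
  proof (rule SUP_least)
    fix w'
    show "ereal (blinfun_apply w' a) - fenchel f w' \<le> ereal (blinfun_apply aw a - b)"
    proof (cases "fenchel f w'")
      case (real c)
      then show ?thesis using key[OF real] b by simp
    qed (use fenchel_ninf[of w'] in auto)
  qed
  then obtain \<alpha> where \<alpha>: "f a = ereal \<alpha>" "\<alpha> \<le> blinfun_apply aw a - b"
    using fin[of a] by (cases "f a") auto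
  have "aw \<in> subdiff f a"
    unfolding subdiff_iff[OF \<alpha>(1)]
  proof
    fix y
    have "ereal (blinfun_apply aw y) - f y \<le> ereal b" using fenchel_upper[of aw y] b by simp
    then show "ereal (\<alpha> + blinfun_apply aw (y - a)) \<le> f y"
      using \<alpha>(2) fin[of y] by (cases "f y") (auto simp: blinfun.diff_right)
  qed
  then show ?thesis by (simp add: graph_subdiff_def)
qed

lemma phi_term_alt:
  "(\<lambda>p. ereal (blinfun_apply (snd p) (fst q) + blinfun_apply (snd q) (fst p) - blinfun_apply (snd q) (fst q)))
   = (\<lambda>p. ereal ((blinfun_apply (snd q) (fst p) + blinfun_apply (snd p) (fst q)) + - blinfun_apply (snd q) (fst q)))"
  by (rule ext) simp

lemma phi_in: "phi f \<in> fitzpatrick_family (graph_subdiff f)"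
  unfolding fitzpatrick_family_def
proof (intro CollectI conjI allI)
  have ge: "ereal (blinfun_apply w x) \<le> phi f (x, w)" for x w
  proof (cases "(x, w) \<in> graph_subdiff f")
    case True
    then show ?thesis unfolding phi_def by (auto intro!: SUP_upper2[OF True])
  next
    case False
    then obtain y u where yu: "(y, u) \<in> graph_subdiff f"
      and neg: "blinfun_apply w x - blinfun_apply w y - blinfun_apply u x + blinfun_apply u y < 0"
      using maxmono[of w x] by force
    have "ereal (blinfun_apply w x) \<le> ereal (blinfun_apply w y + blinfun_apply u x - blinfun_apply u y)"
      using neg by simp
    also have "\<dots> \<le> phi f (x, w)" unfolding phi_def by (rule SUP_upper2[OF yu]) simp
    finally show ?thesis .
  qed
  have gr: "phi f (x, w) = ereal (blinfun_apply w x)" if xw: "(x, w) \<in> graph_subdiff f" for x w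
  proof (rule antisym[OF _ ge])
    show "phi f (x, w) \<le> ereal (blinfun_apply w x)" unfolding phi_def
    proof (rule SUP_least)
      fix q assume q: "q \<in> graph_subdiff f"
      obtain y u where yu: "q = (y, u)" by (cases q)
      with subdiff_mono[OF xw q[unfolded yu]]
      show "ereal (blinfun_apply (snd (x, w)) (fst q) + blinfun_apply (snd q) (fst (x, w)) - blinfun_apply (snd q) (fst q)) \<le> ereal (blinfun_apply w x)"
        by simp
    qed
  qed
  obtain x w where xw: "(x, w) \<in> graph_subdiff f" using gne by auto
  show "ext_proper (phi f)"
    unfolding ext_proper_def
  proof
    show "\<forall>p. phi f p \<noteq> -\<infinity>"
    proof
      fix p :: "'a \<times> ('a \<Rightarrow>\<^sub>L real)"
      obtain x w where "p = (x, w)" by (cases p)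
      then show "phi f p \<noteq> -\<infinity>" using ge[of w x] by auto
    qed
    show "\<exists>p. phi f p \<noteq> \<infinity>" using gr[OF xw] by (intro exI[of _ "(x, w)"]) simp
  qed
  show "ext_convex (phi f)" unfolding phi_def
    apply (rule ext_convex_SUP)
    unfolding phi_term_alt by (rule ext_convex_affine[OF linear_gp])
  show "ext_lsc (phi f)" unfolding phi_def
    apply (rule ext_lsc_SUP)
    unfolding phi_term_alt by (rule ext_lsc_cont) (intro continuous_intros)
  show "ereal (blinfun_apply v x) \<le> phi f (x, v)" for x v by (rule ge)
  show "\<forall>(x, v)\<in>graph_subdiff f. phi f (x, v) = ereal (blinfun_apply v x)"
    using gr by auto
qed

lemma phi_eq: "phi f = hh1 f"
  by (rule F_eq[OF phi_in])

lemma near_max: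
  assumes "f x = ereal \<alpha>" "fenchel f v = ereal a" "0 < \<epsilon>"
  obtains y u where "(y, u) \<in> graph_subdiff f"
    "blinfun_apply v y + blinfun_apply u x - blinfun_apply u y > \<alpha> + a - \<epsilon>"
proof -
  have "phi f (x, v) = ereal (\<alpha> + a)" using assms unfolding phi_eq hh1_def by simp
  then have "ereal (\<alpha> + a - \<epsilon>) < phi f (x, v)" using assms(3) by simp
  then obtain q where "q \<in> graph_subdiff f"
    "ereal (\<alpha> + a - \<epsilon>) < ereal (blinfun_apply v (fst q) + blinfun_apply (snd q) x - blinfun_apply (snd q) (fst q))"
    unfolding phi_def by (auto simp: less_SUP_iff)
  then show ?thesis using that[of "fst q" "snd q"] by (cases q) auto
qed

end

context fp
begin

lemma loc_bdd:
  assumes "x \<in> interior (dom_ext f)"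
  obtains \<rho> M where "\<rho> > 0" "\<And>y. y \<in> ball x \<rho> \<Longrightarrow> f y \<le> ereal M"
proof -
  obtain r where r: "r > 0" "ball x r \<subseteq> dom_ext f" using assms by (meson mem_interior)
  define X where "X = top_of_set (ball x r)"
  define T where "T = (\<lambda>n::nat. {y \<in> ball x r. f y \<le> ereal (real n)})"
  have cm: "completely_metrizable_space X" unfolding X_def
    by (rule completely_metrizable_space_openin[OF completely_metrizable_space_euclidean]) (simp add: open_openin[symmetric])
  have top: "topspace X = ball x r" unfolding X_def by simp
  have cl: "closedin X (T n)" for n
  proof -
    have "closed {y. f y \<le> ereal (real n)}" using lsc unfolding ext_lsc_def by blast
    then show ?thesis unfolding X_def T_def closedin_closed by (intro exI[of _ "{y. f y \<le> ereal (real n)}"]) auto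
  qed
  have un: "\<Union>(range T) = ball x r"
  proof
    show "\<Union>(range T) \<subseteq> ball x r" unfolding T_def by auto
    show "ball x r \<subseteq> \<Union>(range T)"
    proof
      fix y assume y: "y \<in> ball x r"
      then have "f y \<noteq> \<infinity>" using r(2) by (auto simp: dom_ext_def)
      then obtain c where c: "f y = ereal c" using fin[of y] by (cases "f y") auto
      obtain n :: nat where "c \<le> real n" using real_arch_simple by blast
      then have "y \<in> T n" using y c unfolding T_def by auto
      then show "y \<in> \<Union>(range T)" by blast
    qed
  qed
  have "\<exists>n. X interior_of T n \<noteq> {}"
  proof (rule ccontr)
    assume "\<not> (\<exists>n. X interior_of T n \<noteq> {})"
    then have "X interior_of \<Union>(range T) = {}"
      by (intro Baire_category_alt) (use cm cl in auto)
    then have "X interior_of topspace X = {}" using un top by simp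
    then have "topspace X = {}" by (simp only: interior_of_topspace)
    then show False using r(1) top by simp
  qed
  then obtain n y1 where "y1 \<in> X interior_of T n" by blast
  then obtain U where U: "openin X U" "y1 \<in> U" "U \<subseteq> T n" unfolding interior_of_def by blast
  then obtain U' where "open U'" "U = ball x r \<inter> U'" unfolding X_def openin_open by blast
  then have "open U" by auto
  then obtain r1 where r1: "r1 > 0" "ball y1 r1 \<subseteq> U" using U(2) open_contains_ball by blast
  have y1: "y1 \<in> ball x r" using U unfolding T_def by auto
  have bnd1: "f w \<le> ereal (real n)" if "w \<in> ball y1 r1" for w using that r1 U(3) unfolding T_def by auto
  show ?thesis
  proof (cases "y1 = x")
    case True
    then show ?thesis using that[of r1 "real n"] r1 bnd1 by auto
  next
    case False
    define \<tau> where "\<tau> = r / (2 * norm (x - y1))"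
    have nx: "norm (x - y1) > 0" using False by simp
    have tau: "\<tau> > 0" using r nx unfolding \<tau>_def by simp
    define q where "q = x + \<tau> *\<^sub>R (x - y1)"
    have "norm (q - x) = r / 2" unfolding q_def \<tau>_def using nx tau r by simp
    then have "q \<in> ball x r" using r by (simp add: dist_norm norm_minus_commute)
    then have "f q \<noteq> \<infinity>" using r(2) by (auto simp: dom_ext_def)
    then obtain Q where Q: "f q = ereal Q" using fin[of q] by (cases "f q") auto
    define l where "l = \<tau> / (1 + \<tau>)"
    have l: "0 < l" "l < 1" "1 - l = 1 / (1 + \<tau>)" unfolding l_def using tau by (auto simp: field_simps)
    have l2: "(1 - l) * (1 + \<tau>) = 1" "(1 - l) * \<tau> = l" using l tau unfolding l_def by (auto simp: field_simps)
    show ?thesis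
    proof (rule that[of "l * r1" "max Q (real n)"])
      show "0 < l * r1" using l r1 by simp
      fix y assume y: "y \<in> ball x (l * r1)"
      define b where "b = (1 / l) *\<^sub>R (y - x)"
      have yb: "y = x + l *\<^sub>R b" unfolding b_def using l by simp
      have nb: "norm b = norm (y - x) / l" unfolding b_def using l by simp
      have "norm (y - x) < l * r1" using y by (simp add: dist_norm norm_minus_commute)
      then have "norm b < r1" unfolding nb using l by (simp add: pos_divide_less_eq mult.commute)
      then have "y1 + b \<in> ball y1 r1" by (simp add: dist_norm)
      then have fb: "f (y1 + b) \<le> ereal (real n)" by (rule bnd1)
      then obtain c where c: "f (y1 + b) = ereal c" "c \<le> real n" using fin[of "y1 + b"] by (cases "f (y1 + b)") auto
      have eq: "(1 - l) *\<^sub>R q + l *\<^sub>R (y1 + b) = y"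
      proof -
        have "(1 - l) *\<^sub>R q + l *\<^sub>R (y1 + b) = ((1 - l) * (1 + \<tau>)) *\<^sub>R x + (l - (1 - l) * \<tau>) *\<^sub>R y1 + l *\<^sub>R b"
          unfolding q_def by (simp add: algebra_simps)
        also have "\<dots> = x + l *\<^sub>R b" using l2 by simp
        finally show ?thesis using yb by simp
      qed
      have "f y \<le> ereal ((1 - l) * Q + l * c)"
        using ext_convexD[OF cvx Q c(1), of l] l eq by simp
      also have "\<dots> \<le> ereal (max Q (real n))"
      proof -
        have "(1 - l) * Q + l * c \<le> (1 - l) * max Q (real n) + l * max Q (real n)"
          using l c(2) tau by (intro add_mono mult_left_mono) auto
        then have "(1 - l) * Q + l * c \<le> max Q (real n)" by (simp add: algebra_simps)
        then show ?thesis using ereal_less_eq(3) by blast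
      qed
      finally show "f y \<le> ereal (max Q (real n))" .
    qed
  qed
qed

end

locale fpz = fpu f v0 for f :: "'a::banach \<Rightarrow> ereal" and v0 +
  fixes v :: "'a \<Rightarrow>\<^sub>L real" and z :: 'a
  assumes grad: "frechet_grad_at (fenchel f) v z"
begin

definition g where "g = (\<lambda>w. real_of_ereal (fenchel f w))"
definition a where "a = g v"

lemma dbound:
  assumes "\<eta> > 0"
  obtains \<delta> where "\<delta> > 0" "\<And>h. norm h < \<delta> \<Longrightarrow> fenchel f (v + h) = ereal (g (v + h))"
    "\<And>h. norm h < \<delta> \<Longrightarrow> \<bar>g (v + h) - a - blinfun_apply h z\<bar> \<le> \<eta> * norm h"
proof -
  have gr: "(\<exists>e>0. \<forall>w \<in> ball v e. \<bar>fenchel f w\<bar> \<noteq> \<infinity>)"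
    using grad[unfolded frechet_grad_at_def] by (rule conjunct1)
  have d: "(g has_derivative (\<lambda>w. blinfun_apply w z)) (at v)"
    unfolding g_def using grad[unfolded frechet_grad_at_def] by (rule conjunct2)
  from gr obtain e where e0: "e > 0" and eb: "\<forall>w \<in> ball v e. \<bar>fenchel f w\<bar> \<noteq> \<infinity>"
    by (elim exE conjE)
  note e = e0 bspec[OF eb]
  have "\<forall>e>0. \<exists>d>0. \<forall>y. norm (y - v) < d \<longrightarrow> norm (g y - g v - blinfun_apply (y - v) z) \<le> e * norm (y - v)"
    using d[unfolded has_derivative_at_alt] by (rule conjunct2)
  then obtain d where d0: "d > 0"
    and dd: "\<And>y. norm (y - v) < d \<Longrightarrow> norm (g y - g v - blinfun_apply (y - v) z) \<le> \<eta> * norm (y - v)"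
    using assms by blast
  show ?thesis
  proof (rule that[of "min d e"])
    show "min d e > 0" using d0 e by simp
    fix h :: "'a \<Rightarrow>\<^sub>L real" assume h: "norm h < min d e"
    then have "v + h \<in> ball v e" by (simp add: dist_norm)
    then have "\<bar>fenchel f (v + h)\<bar> \<noteq> \<infinity>" by (rule e(2))
    then show "fenchel f (v + h) = ereal (g (v + h))" unfolding g_def by (cases "fenchel f (v + h)") auto
    show "\<bar>g (v + h) - a - blinfun_apply h z\<bar> \<le> \<eta> * norm h"
      using dd[of "v + h"] h unfolding a_def by simp
  qed
qed

lemma Fv: "fenchel f v = ereal a"
proof -
  have "\<exists>e>0. \<forall>w \<in> ball v e. \<bar>fenchel f w\<bar> \<noteq> \<infinity>"
    using grad[unfolded frechet_grad_at_def] by (rule conjunct1)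
  then have "\<bar>fenchel f v\<bar> \<noteq> \<infinity>" by (metis centre_in_ball)
  then show ?thesis unfolding a_def g_def by (cases "fenchel f v") auto
qed

lemma sub: "fenchel f w \<ge> ereal (a + blinfun_apply (w - v) z)"
proof (cases "fenchel f w")
  case PInf then show ?thesis by simp
next
  case MInf then show ?thesis using fenchel_ninf by auto
next
  case (real b)
  have key: "blinfun_apply (w - v) z - \<eta> * norm (w - v) \<le> b - a" if eta: "\<eta> > 0" for \<eta>
  proof (cases "w = v")
    case True then show ?thesis using real Fv by simp
  next
    case False
    then have nwv: "norm (w - v) > 0" by simp
    obtain \<delta> where \<delta>: "\<delta> > 0" "\<And>h. norm h < \<delta> \<Longrightarrow> fenchel f (v + h) = ereal (g (v + h))"
      "\<And>h. norm h < \<delta> \<Longrightarrow> \<bar>g (v + h) - a - blinfun_apply h z\<bar> \<le> \<eta> * norm h"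
      using dbound[OF eta] by blast
    define t where "t = min (1/2) (\<delta> / (2 * norm (w - v)))"
    have t: "0 < t" "t < 1" using \<delta>(1) nwv unfolding t_def by auto
    have tn: "t * norm (w - v) < \<delta>"
    proof -
      have "t * norm (w - v) \<le> (\<delta> / (2 * norm (w - v))) * norm (w - v)"
        unfolding t_def using nwv by (intro mult_right_mono) auto
      also have "\<dots> = \<delta> / 2" using nwv by simp
      finally show ?thesis using \<delta>(1) by simp
    qed
    define h where "h = t *\<^sub>R (w - v)"
    have nh: "norm h = t * norm (w - v)" unfolding h_def using t by simp
    have eqp: "(1 - t) *\<^sub>R v + t *\<^sub>R w = v + h" unfolding h_def by (simp add: algebra_simps)
    have "fenchel f (v + h) \<le> ereal ((1 - t) * a + t * b)"
      using ext_convexD[OF fenchel_convex Fv real, of t] t eqp by simp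
    then have up: "g (v + h) \<le> (1 - t) * a + t * b" using \<delta>(2)[of h] nh tn by simp
    have low: "g (v + h) \<ge> a + blinfun_apply h z - \<eta> * norm h" using \<delta>(3)[of h] nh tn by simp
    have e1: "blinfun_apply h z = t * blinfun_apply (w - v) z" unfolding h_def by (simp add: blinfun.scaleR_left)
    have e2: "t * (blinfun_apply (w - v) z - \<eta> * norm (w - v)) = blinfun_apply h z - \<eta> * norm h"
      using e1 nh by (simp add: algebra_simps)
    have e3: "t * (b - a) = ((1 - t) * a + t * b) - a" by (simp add: algebra_simps)
    have "t * (blinfun_apply (w - v) z - \<eta> * norm (w - v)) \<le> t * (b - a)"
      unfolding e2 e3 using up low by linarith
    then show ?thesis using t by simp
  qed
  have "blinfun_apply (w - v) z \<le> b - a"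
  proof (rule ccontr)
    assume "\<not> ?thesis"
    then have pos: "blinfun_apply (w - v) z - (b - a) > 0" by simp
    define \<eta> where "\<eta> = (blinfun_apply (w - v) z - (b - a)) / (2 * (norm (w - v) + 1))"
    have den: "0 < 2 * (norm (w - v) + 1)" by (smt (verit) norm_ge_zero)
    have eta: "\<eta> > 0" unfolding \<eta>_def using pos den by (rule divide_pos_pos)
    have "\<eta> * norm (w - v) < blinfun_apply (w - v) z - (b - a)"
    proof -
      have "\<eta> * norm (w - v) \<le> \<eta> * (norm (w - v) + 1)" using eta by simp
      also have "\<dots> = (blinfun_apply (w - v) z - (b - a)) / 2"
      proof -
        have nz: "norm (w - v) + 1 \<noteq> 0" by (smt (verit) norm_ge_zero)
        show ?thesis unfolding \<eta>_def using nz by (simp add: field_simps)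
      qed
      finally show ?thesis using pos by simp
    qed
    then show False using key[OF eta] by simp
  qed
  then show ?thesis using real by simp
qed

definition fz where "fz = blinfun_apply v z - a"

lemma fz: "f z = ereal fz"
proof -
  have le: "f z \<le> ereal fz"
    unfolding bic_eq[of z, symmetric] bic_def
  proof (rule SUP_least)
    fix w
    show "ereal (blinfun_apply w z) - fenchel f w \<le> ereal fz"
    proof (cases "fenchel f w")
      case (real b)
      then have "b \<ge> a + blinfun_apply (w - v) z" using sub[of w] by simp
      then show ?thesis using real unfolding fz_def by (simp add: blinfun.diff_left)
    qed (use fenchel_ninf[of w] in auto)
  qed
  have "ereal (blinfun_apply v z) - f z \<le> ereal a" using fenchel_upper[of v z] Fv by simp
  then have "f z \<ge> ereal fz" unfolding fz_def using fin[of z] by (cases "f z") auto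
  then show ?thesis using le by simp
qed

lemma v_sub: "f y \<ge> ereal (fz + blinfun_apply v (y - z))"
proof -
  have "ereal (blinfun_apply v y) - f y \<le> ereal a" using fenchel_upper[of v y] Fv by simp
  then show ?thesis unfolding fz_def using fin[of y] by (cases "f y") (auto simp: blinfun.diff_right)
qed

lemma Lprime:
  assumes fx: "f x = ereal \<alpha>" and \<rho>: "\<rho> > 0" and bnd: "\<And>y. y \<in> ball x \<rho> \<Longrightarrow> f y \<le> ereal M"
    and \<kappa>: "\<kappa> > 0"
  obtains u where "\<And>x'. f x' \<ge> ereal (\<alpha> + blinfun_apply u (x' - x) - \<kappa>)"
    "\<alpha> + blinfun_apply u (z - x) \<ge> fz - \<kappa>"
proof -
  have "f x \<le> ereal M" using bnd \<rho> by simp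
  then have aM: "\<alpha> \<le> M" using fx by simp
  define C0 where "C0 = M - \<alpha> + 1"
  have C0: "C0 > 0" unfolding C0_def using aM by simp
  define B1 where "B1 = 2 * C0 / \<rho> + norm v + 1"
  have B1: "B1 > 0" unfolding B1_def using C0 \<rho> by (simp add: add_pos_nonneg)
  define \<eta> where "\<eta> = \<kappa> / (2 * B1)"
  have eta: "\<eta> > 0" unfolding \<eta>_def using \<kappa> B1 by simp
  obtain \<delta> where \<delta>: "\<delta> > 0" "\<And>h. norm h < \<delta> \<Longrightarrow> fenchel f (v + h) = ereal (g (v + h))"
    "\<And>h. norm h < \<delta> \<Longrightarrow> \<bar>g (v + h) - a - blinfun_apply h z\<bar> \<le> \<eta> * norm h"
    using dbound[OF eta] by blast
  define \<epsilon> where "\<epsilon> = min 1 (min \<kappa> (\<kappa> * \<delta> / (4 * B1)))"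
  have eps: "\<epsilon> > 0" "\<epsilon> \<le> 1" "\<epsilon> \<le> \<kappa>" "\<epsilon> \<le> \<kappa> * \<delta> / (4 * B1)"
    unfolding \<epsilon>_def using \<kappa> \<delta> B1 by auto
  obtain y u where yu: "(y, u) \<in> graph_subdiff f"
    and nm: "blinfun_apply v y + blinfun_apply u x - blinfun_apply u y > \<alpha> + a - \<epsilon>"
    using near_max[OF fx Fv eps(1)] by blast
  from yu have usub: "u \<in> subdiff f y" by (simp add: graph_subdiff_def)
  obtain \<beta> where \<beta>: "f y = ereal \<beta>" using subdiff_fin[OF usub] by blast
  have uineq: "f x' \<ge> ereal (\<beta> + blinfun_apply u (x' - y))" for x'
    using usub unfolding subdiff_iff[OF \<beta>] by blast
  have 1: "blinfun_apply v y - \<beta> \<le> a" using fenchel_upper[of v y] Fv \<beta> by simp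
  have 2: "blinfun_apply u (x - y) \<le> \<alpha> - \<beta>" using uineq[of x] fx by simp
  have lin: "blinfun_apply u (x - y) = blinfun_apply u x - blinfun_apply u y" by (simp add: blinfun.diff_right)
  have i: "blinfun_apply v y - \<beta> > a - \<epsilon>" using nm 2 lin by linarith
  have ii: "\<alpha> - \<beta> - blinfun_apply u (x - y) < \<epsilon>" using nm 1 lin by linarith
  have epssub: "f x' \<ge> ereal (\<alpha> + blinfun_apply u (x' - x) - \<epsilon>)" for x'
  proof -
    have "blinfun_apply u (x' - y) = blinfun_apply u (x' - x) + blinfun_apply u (x - y)"
      by (simp add: blinfun.diff_right)
    then have "\<beta> + blinfun_apply u (x' - y) \<ge> \<alpha> + blinfun_apply u (x' - x) - \<epsilon>" using ii by linarith
    then show ?thesis using uineq[of x'] by (meson ereal_less_eq(3) order_trans)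
  qed
  have ubd: "blinfun_apply u h \<le> C0" if "norm h < \<rho>" for h
  proof -
    have "x + h \<in> ball x \<rho>" using that by (simp add: dist_norm)
    then have "f (x + h) \<le> ereal M" by (rule bnd)
    moreover have "f (x + h) \<ge> ereal (\<alpha> + blinfun_apply u h - \<epsilon>)" using epssub[of "x + h"] by simp
    ultimately have "\<alpha> + blinfun_apply u h - \<epsilon> \<le> M" by (meson ereal_less_eq(3) order_trans)
    then show ?thesis unfolding C0_def using eps by linarith
  qed
  have normu: "norm u \<le> 2 * C0 / \<rho>"
  proof (rule norm_blinfun_bound)
    show "0 \<le> 2 * C0 / \<rho>" using C0 \<rho> by simp
    fix h
    show "norm (blinfun_apply u h) \<le> 2 * C0 / \<rho> * norm h"
    proof (cases "h = 0")
      case True then show ?thesis by simp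
    next
      case False
      then have nh: "norm h > 0" by simp
      define h' where "h' = (\<rho> / (2 * norm h)) *\<^sub>R h"
      have nh': "norm h' = \<rho> / 2" unfolding h'_def using nh \<rho> by simp
      have a1: "blinfun_apply u h' \<le> C0" using ubd[of h'] nh' \<rho> by simp
      have a2: "blinfun_apply u (- h') \<le> C0" using ubd[of "- h'"] nh' \<rho> by simp
      have "\<bar>blinfun_apply u h'\<bar> \<le> C0" using a1 a2 by (simp add: blinfun.minus_right)
      moreover have "blinfun_apply u h' = (\<rho> / (2 * norm h)) * blinfun_apply u h"
        unfolding h'_def by (simp add: blinfun.scaleR_right)
      ultimately have "(\<rho> / (2 * norm h)) * \<bar>blinfun_apply u h\<bar> \<le> C0" using \<rho> nh by (simp add: abs_mult)
      then have "\<bar>blinfun_apply u h\<bar> \<le> C0 * (2 * norm h) / \<rho>" using \<rho> nh by (simp add: field_simps)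
      then show ?thesis by (simp add: field_simps)
    qed
  qed
  define N where "N = norm (u - v)"
  have NB: "N \<le> B1"
  proof -
    have "N \<le> norm u + norm v" unfolding N_def by (rule norm_triangle_ineq4)
    then show ?thesis using normu unfolding B1_def by linarith
  qed
  have smul: "blinfun_apply (u - v) (y - z) \<le> B1 * (2 * \<epsilon> / \<delta> + \<eta>)"
  proof (cases "N = 0")
    case True
    then have "u = v" unfolding N_def by simp
    then show ?thesis using B1 eps \<delta> eta by simp
  next
    case False
    then have N0: "N > 0" unfolding N_def by simp
    define t where "t = \<delta> / (2 * N)"
    have t: "t > 0" unfolding t_def using \<delta> N0 by simp
    define h where "h = t *\<^sub>R (u - v)"
    have nh: "norm h = \<delta> / 2" unfolding h_def t_def N_def using N0 \<delta> N_def by simp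
    then have nhd: "norm h < \<delta>" using \<delta> by simp
    have "ereal (blinfun_apply (v + h) y) - f y \<le> fenchel f (v + h)" by (rule fenchel_upper)
    then have "blinfun_apply (v + h) y - \<beta> \<le> g (v + h)" using \<delta>(2)[OF nhd] \<beta> by simp
    moreover have "g (v + h) \<le> a + blinfun_apply h z + \<eta> * norm h" using \<delta>(3)[OF nhd] by simp
    ultimately have "blinfun_apply h (y - z) < \<epsilon> + \<eta> * (\<delta> / 2)"
      using i nh by (simp add: blinfun.add_left blinfun.diff_right)
    then have "t * blinfun_apply (u - v) (y - z) < \<epsilon> + \<eta> * (\<delta> / 2)"
      unfolding h_def by (simp add: blinfun.scaleR_left)
    then have "blinfun_apply (u - v) (y - z) < (\<epsilon> + \<eta> * (\<delta> / 2)) / t"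
      using t by (simp add: field_simps)
    also have "\<dots> = N * (2 * \<epsilon> / \<delta> + \<eta>)" unfolding t_def using \<delta> N0 by (simp add: field_simps)
    also have "\<dots> \<le> B1 * (2 * \<epsilon> / \<delta> + \<eta>)"
      using NB eps \<delta> eta by (intro mult_right_mono) auto
    finally show ?thesis by simp
  qed
  have "B1 * (2 * \<epsilon> / \<delta> + \<eta>) \<le> \<kappa>"
  proof -
    have "2 * \<epsilon> / \<delta> \<le> 2 * (\<kappa> * \<delta> / (4 * B1)) / \<delta>"
      apply (rule divide_right_mono) using eps(4) \<delta>(1) by linarith+
    also have "\<dots> = \<kappa> / (2 * B1)" using \<delta> B1 by (simp add: field_simps)
    finally have "B1 * (2 * \<epsilon> / \<delta> + \<eta>) \<le> B1 * (\<kappa> / (2 * B1) + \<kappa> / (2 * B1))"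
      unfolding \<eta>_def using B1 by (intro mult_left_mono) auto
    also have "\<dots> = \<kappa>" using B1 by (simp add: field_simps)
    finally show ?thesis .
  qed
  then have smul2: "blinfun_apply (u - v) (y - z) \<le> \<kappa>" using smul by linarith
  have second: "\<alpha> + blinfun_apply u (z - x) \<ge> fz - \<kappa>"
  proof -
    have "f y \<ge> ereal (fz + blinfun_apply v (y - z))" by (rule v_sub)
    then have b1: "\<beta> \<ge> fz + blinfun_apply v (y - z)" using \<beta> by simp
    have e1: "blinfun_apply u (z - x) = blinfun_apply u (z - y) - blinfun_apply u (x - y)"
      by (simp add: blinfun.diff_right)
    have e2: "blinfun_apply (u - v) (y - z) = blinfun_apply u (y - z) - blinfun_apply v (y - z)"
      by (simp add: blinfun.diff_left)
    have e3: "blinfun_apply u (z - y) = - blinfun_apply u (y - z)"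
      by (metis blinfun.minus_right minus_diff_eq)
    show ?thesis using b1 2 e1 e2 e3 smul2 by linarith
  qed
  show ?thesis
  proof (rule that[OF _ second])
    fix x'
    have "ereal (\<alpha> + blinfun_apply u (x' - x) - \<kappa>) \<le> ereal (\<alpha> + blinfun_apply u (x' - x) - \<epsilon>)"
      using eps by simp
    then show "f x' \<ge> ereal (\<alpha> + blinfun_apply u (x' - x) - \<kappa>)" using epssub[of x'] by (meson order_trans)
  qed
qed

lemma step6:
  assumes x0: "x0 \<in> interior (dom_ext f)" and xs: "xs \<in> subdiff f x0"
  shows "xs \<in> subdiff f z"
proof -
  obtain \<alpha>0 where a0: "f x0 = ereal \<alpha>0" using subdiff_fin[OF xs] by blast
  have xsi: "f y \<ge> ereal (\<alpha>0 + blinfun_apply xs (y - x0))" for y using xs unfolding subdiff_iff[OF a0] by blast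
  obtain r where r: "r > 0" "ball x0 r \<subseteq> dom_ext f" using x0 by (meson mem_interior)
  define d where "d = z - x0"
  define s where "s = r / (2 * (norm d + 1))"
  have den: "0 < 2 * (norm d + 1)" by (smt (verit) norm_ge_zero)
  have s: "s > 0" unfolding s_def by (intro divide_pos_pos r(1) den)
  define x where "x = x0 - s *\<^sub>R d"
  have sd: "s * norm d < r / 2"
  proof -
    have "s * norm d \<le> s * (norm d + 1)" using s by simp
    also have "\<dots> = r / 2" unfolding s_def using den by (simp add: field_simps)
    finally show ?thesis
    proof -
      have "s * norm d < s * (norm d + 1)" using s by simp
      then show ?thesis using \<open>s * (norm d + 1) = r / 2\<close> by simp
    qed
  qed
  have "ball x (r / 2) \<subseteq> ball x0 r"
  proof
    fix y assume "y \<in> ball x (r / 2)"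
    then have "dist x y < r / 2" by simp
    moreover have "dist x0 x = s * norm d" unfolding x_def using s by (simp add: dist_norm)
    ultimately have "dist x0 y < r" using sd dist_triangle[of x0 y x] by linarith
    then show "y \<in> ball x0 r" by simp
  qed
  then have "ball x (r / 2) \<subseteq> dom_ext f" using r by blast
  then have xint: "x \<in> interior (dom_ext f)" using r by (meson centre_in_ball half_gt_zero interior_maximal open_ball subsetD)
  then have "f x \<noteq> \<infinity>" using interior_subset by (force simp: dom_ext_def)
  then obtain \<alpha> where ax: "f x = ereal \<alpha>" using fin[of x] by (cases "f x") auto
  obtain \<rho> M where \<rho>: "\<rho> > 0" "\<And>y. y \<in> ball x \<rho> \<Longrightarrow> f y \<le> ereal M" using loc_bdd[OF xint] by blast
  have key: "fz \<le> \<alpha>0 + blinfun_apply xs d + 2 * \<kappa> + \<kappa> / s" if \<kappa>: "\<kappa> > 0" for \<kappa>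
  proof -
    obtain u where u1: "\<And>x'. f x' \<ge> ereal (\<alpha> + blinfun_apply u (x' - x) - \<kappa>)"
      and u2: "\<alpha> + blinfun_apply u (z - x) \<ge> fz - \<kappa>"
      using Lprime[OF ax \<rho> \<kappa>] by blast
    have ud1: "blinfun_apply u (x0 - x) = s * blinfun_apply u d" unfolding x_def by (simp add: blinfun.scaleR_right)
    have ud2: "blinfun_apply u (z - x) = (1 + s) * blinfun_apply u d"
    proof -
      have "z - x = (1 + s) *\<^sub>R d" unfolding x_def d_def by (simp add: algebra_simps)
      then show ?thesis by (simp add: blinfun.scaleR_right)
    qed
    have xd: "blinfun_apply xs (x - x0) = - s * blinfun_apply xs d" unfolding x_def by (simp add: blinfun.scaleR_right blinfun.minus_right)
    have A: "\<alpha>0 \<ge> \<alpha> + s * blinfun_apply u d - \<kappa>" using u1[of x0] a0 ud1 by simp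
    have B: "\<alpha> \<ge> \<alpha>0 - s * blinfun_apply xs d" using xsi[of x] ax xd by simp
    have "s * blinfun_apply u d \<le> s * blinfun_apply xs d + \<kappa>" using A B by linarith
    then have "(blinfun_apply u d - blinfun_apply xs d) * s \<le> \<kappa>" by (simp add: algebra_simps)
    then have "blinfun_apply u d - blinfun_apply xs d \<le> \<kappa> / s" using s by (simp add: pos_le_divide_eq)
    then have C: "blinfun_apply u d \<le> blinfun_apply xs d + \<kappa> / s" by simp
    have "fz - \<kappa> \<le> \<alpha> + s * blinfun_apply u d + blinfun_apply u d" using u2 ud2 by (simp add: algebra_simps)
    then show ?thesis using A C by linarith
  qed
  have fzle: "fz \<le> \<alpha>0 + blinfun_apply xs d"
  proof (rule ccontr)
    assume "\<not> ?thesis"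
    then have pos: "fz - (\<alpha>0 + blinfun_apply xs d) > 0" by simp
    define c where "c = 2 + 1 / s"
    have c: "c > 0" unfolding c_def using s by (smt (verit) divide_pos_pos zero_less_one)
    define \<kappa> where "\<kappa> = (fz - (\<alpha>0 + blinfun_apply xs d)) / (2 * c)"
    have k: "\<kappa> > 0" unfolding \<kappa>_def using pos c by simp
    have "2 * \<kappa> + \<kappa> / s = \<kappa> * c" unfolding c_def by (simp add: algebra_simps)
    also have "\<dots> = (fz - (\<alpha>0 + blinfun_apply xs d)) / 2" unfolding \<kappa>_def using c
      by (simp add: field_simps)
    finally have eqk: "2 * \<kappa> + \<kappa> / s = (fz - (\<alpha>0 + blinfun_apply xs d)) / 2" .
    have "fz \<le> \<alpha>0 + blinfun_apply xs d + (2 * \<kappa> + \<kappa> / s)" using key[OF k] by simp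
    then have "fz \<le> \<alpha>0 + blinfun_apply xs d + (fz - (\<alpha>0 + blinfun_apply xs d)) / 2" unfolding eqk .
    then show False using pos by (simp add: field_simps)
  qed
  show ?thesis
    unfolding subdiff_iff[OF fz]
  proof
    fix y
    have "blinfun_apply xs (y - x0) = blinfun_apply xs (y - z) + blinfun_apply xs d"
      unfolding d_def by (simp add: blinfun.diff_right)
    then have "\<alpha>0 + blinfun_apply xs (y - x0) \<ge> fz + blinfun_apply xs (y - z)" using fzle by linarith
    then show "ereal (fz + blinfun_apply xs (y - z)) \<le> f y" using xsi[of y] by (meson ereal_less_eq(3) order_trans)
  qed
qed

end

lemma weak_star_topspace: "topspace (weak_star_topology :: ('a::real_normed_vector \<Rightarrow>\<^sub>L real) topology) = UNIV"
proof -
  have "UNIV \<in> {{v::'a \<Rightarrow>\<^sub>L real. blinfun_apply v x \<in> U} | x U. open U}"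
    by (rule CollectI, rule exI[of _ 0], rule exI[of _ UNIV]) auto
  then show ?thesis unfolding weak_star_topology_def by (auto simp: topology_generated_by_topspace)
qed

lemma weak_star_open_basic:
  "openin weak_star_topology {v::'a::real_normed_vector \<Rightarrow>\<^sub>L real. blinfun_apply v x > c}"
proof -
  have "{v::'a \<Rightarrow>\<^sub>L real. blinfun_apply v x > c} \<in> {{v::'a \<Rightarrow>\<^sub>L real. blinfun_apply v x \<in> U} | x U. open U}"
    by (rule CollectI, rule exI[of _ x], rule exI[of _ "{c<..}"]) auto
  then show ?thesis unfolding weak_star_topology_def by (rule topology_generated_by_Basis)
qed

lemma convex_level: "convex {k. blinfun_apply w k = (c::real)}"
  unfolding convex_def
proof (intro ballI allI impI CollectI)
  fix x y and u v :: real
  assume "x \<in> {k. blinfun_apply w k = c}" "y \<in> {k. blinfun_apply w k = c}" "0 \<le> u" "0 \<le> v" "u + v = 1"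
  then have "blinfun_apply w (u *\<^sub>R x + v *\<^sub>R y) = u * c + v * c"
    by (simp add: blinfun.add_right blinfun.scaleR_right)
  also have "\<dots> = (u + v) * c" by (simp only: distrib_right)
  finally have "blinfun_apply w (u *\<^sub>R x + v *\<^sub>R y) = (u + v) * c" .
  then show "blinfun_apply w (u *\<^sub>R x + v *\<^sub>R y) = c" using \<open>u + v = 1\<close> by simp
qed

lemma closed_level: "closed {k. blinfun_apply w k = (c::real)}"
  by (intro closed_Collect_eq continuous_intros)

lemma K_sub:
  assumes "A \<subseteq> T" "convex T" "closed T"
  shows "closure (convex hull A) \<subseteq> T"
proof -
  have "convex hull A \<subseteq> T" using assms(1,2) by (rule hull_minimal)
  then show ?thesis using assms(3) by (rule closure_minimal)
qed

context fp
begin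

lemma subdiff_weak_closed:
  assumes fz: "f z = ereal c"
  shows "closedin weak_star_topology (subdiff f z)"
proof -
  define C where "C = (\<lambda>y. {w::'a \<Rightarrow>\<^sub>L real. ereal (c + blinfun_apply w (y - z)) \<le> f y})"
  have eq: "subdiff f z = (\<Inter>y\<in>UNIV. C y)" unfolding C_def using subdiff_iff[OF fz] by auto
  have "closedin weak_star_topology (C y)" for y
  proof (cases "f y")
    case PInf
    then have "C y = UNIV" unfolding C_def by auto
    then show ?thesis using closedin_topspace[of weak_star_topology] weak_star_topspace by metis
  next
    case MInf then show ?thesis using fin by auto
  next
    case (real \<beta>)
    have "UNIV - C y = {w. blinfun_apply w (y - z) > \<beta> - c}" unfolding C_def using real by auto
    then have "openin weak_star_topology (topspace weak_star_topology - C y)"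
      using weak_star_open_basic weak_star_topspace by metis
    then show ?thesis unfolding closedin_def weak_star_topspace by simp
  qed
  then show ?thesis unfolding eq by (intro closedin_INT) auto
qed

lemma subdiff_convex:
  assumes fz: "f z = ereal c"
  shows "convex (subdiff f z)"
  unfolding convex_def
proof (intro ballI allI impI)
  fix w1 w2 :: "'a \<Rightarrow>\<^sub>L real" and p q :: real
  assume w1: "w1 \<in> subdiff f z" and w2: "w2 \<in> subdiff f z" and pq: "0 \<le> p" "0 \<le> q" "p + q = 1"
  show "p *\<^sub>R w1 + q *\<^sub>R w2 \<in> subdiff f z"
    unfolding subdiff_iff[OF fz]
  proof
    fix y
    have 1: "ereal (c + blinfun_apply w1 (y - z)) \<le> f y" using w1 subdiff_iff[OF fz] by blast
    have 2: "ereal (c + blinfun_apply w2 (y - z)) \<le> f y" using w2 subdiff_iff[OF fz] by blast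
    show "ereal (c + blinfun_apply (p *\<^sub>R w1 + q *\<^sub>R w2) (y - z)) \<le> f y"
    proof (cases "f y")
      case (real \<beta>)
      have "c + blinfun_apply w1 (y - z) \<le> \<beta>" "c + blinfun_apply w2 (y - z) \<le> \<beta>" using 1 2 real by auto
      then have "p * (c + blinfun_apply w1 (y - z)) + q * (c + blinfun_apply w2 (y - z)) \<le> p * \<beta> + q * \<beta>"
        using pq by (intro add_mono mult_left_mono) auto
      moreover have "blinfun_apply (p *\<^sub>R w1 + q *\<^sub>R w2) (y - z) = p * blinfun_apply w1 (y - z) + q * blinfun_apply w2 (y - z)"
        by (simp add: blinfun.add_left blinfun.scaleR_left)
      moreover have qq: "q = 1 - p" using pq(3) by linarith
      ultimately have "c + blinfun_apply (p *\<^sub>R w1 + q *\<^sub>R w2) (y - z) \<le> \<beta>"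
        by (simp add: qq algebra_simps)
      then show ?thesis using real by simp
    qed (use fin in auto)
  qed
qed

end

theorem proposition4p4:
  fixes f :: "'a::banach \<Rightarrow> ereal"
  assumes "ext_proper f" and "ext_convex f" and "ext_lsc f"
    and "\<exists>!h. h \<in> fitzpatrick_family (graph_subdiff f)"
    and "0 \<in> weak_star_closed_convex_hull (\<Union>x \<in> interior (dom_ext f). subdiff f x)"
    and "dom_Dconj f \<noteq> {}"
  shows "closure (convex hull (im_Dconj f)) \<subseteq> argmin_ext f
      \<and> argmin_ext f \<subseteq> dom_ext f
      \<and> (\<forall>k1 \<in> closure (convex hull (im_Dconj f)). \<forall>k2 \<in> closure (convex hull (im_Dconj f)).
           \<forall>v \<in> weak_star_closed_convex_hull (\<Union>x \<in> interior (dom_ext f). subdiff f x).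
             blinfun_apply v (k1 - k2) = 0)
      \<and> (\<forall>x \<in> interior (dom_ext f). \<forall>xs \<in> subdiff f x. \<forall>xh \<in> closure (convex hull (im_Dconj f)).
           f x = ereal (blinfun_apply xs (x - xh)) + (INF y. f y))"
proof -
  interpret fp f using assms(1-3) by unfold_locales
  define S where "S = (\<Union>x \<in> interior (dom_ext f). subdiff f x)"
  define V where "V = weak_star_closed_convex_hull S"
  define K where "K = closure (convex hull (im_Dconj f))"
  have "S \<noteq> {}"
  proof
    assume "S = {}"
    then have "V \<subseteq> {}" unfolding V_def weak_star_closed_convex_hull_def
      by (intro hull_minimal) auto
    then show False using assms(5) unfolding V_def S_def by auto
  qed
  then obtain x1 w1 where "x1 \<in> interior (dom_ext f)" "w1 \<in> subdiff f x1" unfolding S_def by auto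
  then have gne: "graph_subdiff f \<noteq> {}" unfolding graph_subdiff_def by auto
  obtain v1 where "v1 \<in> dom_Dconj f" using assms(6) by auto
  then have "\<exists>e>0. \<forall>w \<in> ball v1 e. \<bar>fenchel f w\<bar> \<noteq> \<infinity>"
    unfolding dom_Dconj_def frechet_differentiable_pt_def by (rule CollectE) (rule conjunct1)
  then have "\<bar>fenchel f v1\<bar> \<noteq> \<infinity>" by (metis centre_in_ball)
  then have v1: "fenchel f v1 \<noteq> \<infinity>" by auto
  interpret fpu f v1 using assms(4) gne v1 by unfold_locales
  have KEY: "\<exists>c. f z = ereal c \<and> S \<subseteq> subdiff f z" if z: "z \<in> im_Dconj f" for z
  proof -
    obtain v where "frechet_grad_at (fenchel f) v z" using z unfolding im_Dconj_def by blast
    then interpret fpz f v1 v z by unfold_locales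
    have Ssub: "S \<subseteq> subdiff f z"
    proof
      fix w assume "w \<in> S"
      then obtain x where x: "x \<in> interior (dom_ext f)" "w \<in> subdiff f x" unfolding S_def by blast
      then show "w \<in> subdiff f z" by (rule step6)
    qed
    show ?thesis by (intro exI[of _ fz] conjI fz Ssub)
  qed
  have KEY2: "V \<subseteq> subdiff f z" if z: "z \<in> im_Dconj f" for z
  proof -
    obtain c where c: "f z = ereal c" and Ss: "S \<subseteq> subdiff f z" using KEY[OF z] by blast
    show ?thesis unfolding V_def weak_star_closed_convex_hull_def
      by (rule hull_minimal[OF Ss]) (simp add: subdiff_convex[OF c] subdiff_weak_closed[OF c])
  qed
  have zero: "0 \<in> V" using assms(5) unfolding V_def S_def .
  have argz: "z \<in> argmin_ext f" if z: "z \<in> im_Dconj f" for z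
  proof -
    obtain c where c: "f z = ereal c" using KEY[OF z] by blast
    have "0 \<in> subdiff f z" using KEY2[OF z] zero by blast
    then have "\<forall>y. f y \<ge> ereal c" unfolding subdiff_iff[OF c] by simp
    then show ?thesis unfolding argmin_ext_def using c by auto
  qed
  have C2: "argmin_ext f \<subseteq> dom_ext f"
  proof
    fix x assume x: "x \<in> argmin_ext f"
    obtain y where "f y \<noteq> \<infinity>" using assms(1) unfolding ext_proper_def by auto
    moreover have "f x \<le> f y" using x unfolding argmin_ext_def by auto
    ultimately show "x \<in> dom_ext f" unfolding dom_ext_def by auto
  qed
  show ?thesis
  proof (cases "im_Dconj f = {}")
    case True
    then show ?thesis using C2 by simp
  next
    case False
    then obtain z0 where z0: "z0 \<in> im_Dconj f" by blast
    obtain c where c: "f z0 = ereal c" using KEY[OF z0] by blast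
    have allc: "\<forall>y. ereal c \<le> f y" using argz[OF z0] c unfolding argmin_ext_def by auto
    have argeq: "argmin_ext f = {x. f x \<le> ereal c}"
    proof (intro set_eqI iffI)
      fix x assume "x \<in> argmin_ext f"
      then have "f x \<le> f z0" unfolding argmin_ext_def by auto
      then show "x \<in> {x. f x \<le> ereal c}" using c by simp
    next
      fix x assume "x \<in> {x. f x \<le> ereal c}"
      then show "x \<in> argmin_ext f" using allc unfolding argmin_ext_def by (auto intro: order_trans)
    qed
    have infc: "(INF y. f y) = ereal c"
    proof (rule antisym)
      show "(INF y. f y) \<le> ereal c" using c by (metis INF_lower UNIV_I)
      show "ereal c \<le> (INF y. f y)" using argz[OF z0] c unfolding argmin_ext_def by (auto intro: INF_greatest)
    qed
    have fzc: "f z = ereal c" if "z \<in> im_Dconj f" for z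
    proof -
      have "\<forall>y. f z \<le> f y" using argz[OF that] unfolding argmin_ext_def by blast
      then have 1: "f z \<le> f z0" by (rule spec)
      have "\<forall>y. f z0 \<le> f y" using argz[OF z0] unfolding argmin_ext_def by blast
      then have 2: "f z0 \<le> f z" by (rule spec)
      show ?thesis using 1 2 c by simp
    qed
    have clarg: "closed (argmin_ext f)" unfolding argeq using assms(3) unfolding ext_lsc_def by blast
    have cvarg: "convex (argmin_ext f)"
      unfolding argeq convex_def
    proof (intro ballI allI impI CollectI)
      fix x y :: 'a and p q :: real
      assume x: "x \<in> {x. f x \<le> ereal c}" and y: "y \<in> {x. f x \<le> ereal c}" and pq: "0 \<le> p" "0 \<le> q" "p + q = 1"
      obtain a where a: "f x = ereal a" "a \<le> c" using x fin[of x] by (cases "f x") auto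
      obtain b where b: "f y = ereal b" "b \<le> c" using y fin[of y] by (cases "f y") auto
      have pp: "p = 1 - q" using pq(3) by linarith
      have "f ((1 - q) *\<^sub>R x + q *\<^sub>R y) \<le> ereal ((1 - q) * a + q * b)"
        using ext_convexD[OF cvx a(1) b(1), of q] pq by simp
      moreover have "(1 - q) * a + q * b \<le> (1 - q) * c + q * c"
        using pq a b pp by (intro add_mono mult_left_mono) auto
      then have "ereal ((1 - q) * a + q * b) \<le> ereal c" by (simp add: algebra_simps)
      ultimately show "f (p *\<^sub>R x + q *\<^sub>R y) \<le> ereal c" unfolding pp by (rule order_trans)
    qed
    have C1: "K \<subseteq> argmin_ext f" unfolding K_def
      by (rule K_sub[OF _ cvarg clarg]) (use argz in blast)
    have C3: "blinfun_apply w (k1 - k2) = 0" if w: "w \<in> V" and k1: "k1 \<in> K" and k2: "k2 \<in> K" for w k1 k2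
    proof -
      have "im_Dconj f \<subseteq> {k. blinfun_apply w k = blinfun_apply w z0}"
      proof
        fix z assume z: "z \<in> im_Dconj f"
        have wz: "w \<in> subdiff f z" and wz0: "w \<in> subdiff f z0" using KEY2[OF z] KEY2[OF z0] w by auto
        have A: "ereal (c + blinfun_apply w (z0 - z)) \<le> f z0" using wz subdiff_iff[OF fzc[OF z]] by blast
        have B: "ereal (c + blinfun_apply w (z - z0)) \<le> f z" using wz0 subdiff_iff[OF c] by blast
        have "blinfun_apply w (z0 - z) \<le> 0" "blinfun_apply w (z - z0) \<le> 0" using A B c fzc[OF z] by auto
        then show "z \<in> {k. blinfun_apply w k = blinfun_apply w z0}" by (simp add: blinfun.diff_right)
      qed
      then have "K \<subseteq> {k. blinfun_apply w k = blinfun_apply w z0}" unfolding K_def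
        by (rule K_sub[OF _ convex_level closed_level])
      then have "blinfun_apply w k1 = blinfun_apply w z0" "blinfun_apply w k2 = blinfun_apply w z0"
        using k1 k2 by blast+
      then show ?thesis by (simp add: blinfun.diff_right)
    qed
    have C4: "f x = ereal (blinfun_apply xs (x - xh)) + (INF y. f y)"
      if x: "x \<in> interior (dom_ext f)" and xs: "xs \<in> subdiff f x" and xh: "xh \<in> K" for x xs xh
    proof -
      obtain \<alpha> where \<alpha>: "f x = ereal \<alpha>" using subdiff_fin[OF xs] by blast
      have "im_Dconj f \<subseteq> {k. blinfun_apply xs k = blinfun_apply xs x + c - \<alpha>}"
      proof
        fix z assume z: "z \<in> im_Dconj f"
        have xsz: "xs \<in> subdiff f z" using KEY[OF z] xs x unfolding S_def by blast
        have A: "ereal (c + blinfun_apply xs (x - z)) \<le> f x" using xsz subdiff_iff[OF fzc[OF z]] by blast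
        have B: "ereal (\<alpha> + blinfun_apply xs (z - x)) \<le> f z" using xs subdiff_iff[OF \<alpha>] by blast
        have "c + blinfun_apply xs (x - z) \<le> \<alpha>" "\<alpha> + blinfun_apply xs (z - x) \<le> c" using A B \<alpha> fzc[OF z] by auto
        then show "z \<in> {k. blinfun_apply xs k = blinfun_apply xs x + c - \<alpha>}" by (simp add: blinfun.diff_right)
      qed
      then have "K \<subseteq> {k. blinfun_apply xs k = blinfun_apply xs x + c - \<alpha>}" unfolding K_def
        by (rule K_sub[OF _ convex_level closed_level])
      then have "blinfun_apply xs xh = blinfun_apply xs x + c - \<alpha>" using xh by auto
      then show ?thesis using \<alpha> infc by (simp add: blinfun.diff_right)
    qed
    show ?thesis
    proof (intro conjI ballI)
      show "closure (convex hull im_Dconj f) \<subseteq> argmin_ext f" using C1 unfolding K_def .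
      show "argmin_ext f \<subseteq> dom_ext f" by (rule C2)
    next
      fix k1 k2 w
      assume "k1 \<in> closure (convex hull im_Dconj f)" "k2 \<in> closure (convex hull im_Dconj f)"
        "w \<in> weak_star_closed_convex_hull (\<Union>x\<in>interior (dom_ext f). subdiff f x)"
      then show "blinfun_apply w (k1 - k2) = 0" using C3 unfolding K_def V_def S_def by blast
    next
      fix x xs xh
      assume "x \<in> interior (dom_ext f)" "xs \<in> subdiff f x" "xh \<in> closure (convex hull im_Dconj f)"
      then show "f x = ereal (blinfun_apply xs (x - xh)) + (INF y. f y)" using C4 unfolding K_def by blast
    qed
  qed
qed


end
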